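(* Let $k,r\in\mathbb N$ with $r\ge2$, let $s_1,\dots,s_r\in\mathbb N$ with $s_i\le k$, let $H_1,\dots,H_r$ be graphs with $v(H_i)\le s_i$, and let $N\in\mathbb N$ with $N\ge r^{C(k+t)}$, where $t=\sum_i s_i$. Let $\mathbf H=(H_i)$, $\mathbf s=(s_i)$. Then for every graph $G$ on $N$ vertices with $G\in\mathcal B'(\mathbf H)\cap\mathcal E(\mathbf s)$ and every $(S,c)\in\mathbf S(G)$, there exist $U\subset S$ and non-negative integers $R_1,\dots,R_r$ with $$|U|=\delta N+\sum_{i=1}^rR_i\qquad\text{and}\qquad R_1,\dots,R_r\le\frac{p|U|}{2^9r},$$ such that for every $i\in[r]$: (a) $\mathfrak I_{H_i,G_i,G}[U]$ is $(p,R_i)$-Janson, and (b) $\mathfrak I_{H_i,G_i,G}[U\cup\{v\}]$ is not $(p,R_i+1)$-Janson for every $v\in S\setminus U$.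
   Context: Constants: $C=300$, $\delta=r^{-50}$, $p=\frac1{2^{25}k^2r^4}$. Hypergraphs are identified with their edge sets; $\mathcal G[W]=\{E\in\mathcal G:E\subset W\}$. For $\nu:\mathcal G\to\mathbb R_{\ge0}$: $e(\nu)=\sum_E\nu(E)$, $d_\nu(L)=\sum_{E\in\mathcal G,L\subset E}\nu(E)$, $\Lambda_p(\nu)=\sum_{L\subset V(\mathcal G),|L|\ge2}d_\nu(L)^2p^{-|L|}$; for $R>0$, $\mathcal G$ is $(p,R)$-Janson if some $\nu$ has $\Lambda_p(\nu)<e(\nu)^2/R$, and every hypergraph is $(p,0)$-Janson. For graphs $F,G$ and $G'\subset G$, $\mathfrak I_{F,G',G}$ is the hypergraph on $V(G)$ with edges the sets $L$ with $G'[L]=G[L]\cong F$. For a colouring $c$ with colours in $[r]$, $G_i$ is the subgraph of edges of colour $i$. $\mathcal E(\mathbf s)$: graphs $G$ such that for all $t'<t$, all graphs $F_1,\dots,F_r$ with $v(F_i)\le s_i$ and $\sum v(F_i)=t'$, every $W\subset V(G)$ with $|W|\ge(\delta/(8r))^{t-t'}v(G)$ and every $c:E(G[W])\to[r]$, some $\mathfrak I_{F_i,G_i,G}[W]$ is $(p,p|W|)$-Janson. $\mathcal B'(\mathbf H)$: graphs $G$ for which there are $S\subset V(G)$ with $|S|\ge\delta^{2/3}v(G)$ and $c:E(G[S])\to[r]$ with $\mathfrak I_{H_i,G_i,G}[S]$ not $(p,2^{-9}r^{-1}\delta p\,v(G))$-Janson for all $i$. $\mathbf S(G)$: the set of pairs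 $(S,c)$ with $S\subset V(G)$, $|S|\ge\delta^{2/3}N$, $c:E(G[S])\to[r]$, such that $\mathfrak I_{H_i,G_i,G}[S]$ is not $(p,2^{-9}r^{-1}\delta pN)$-Janson for every $i\in[r]$. *)

theory Defs
  imports "HOL-Analysis.Analysis"
begin

type_synonym 'a graph = "'a set \<times> 'a set set"

definition verts :: "'a graph \<Rightarrow> 'a set" where "verts G = fst G"
definition edges :: "'a graph \<Rightarrow> 'a set set" where "edges G = snd G"

definition wf_graph :: "'a graph \<Rightarrow> bool" where
  "wf_graph G \<longleftrightarrow> finite (verts G) \<and> (\<forall>e\<in>edges G. e \<subseteq> verts G \<and> card e = 2)"

definition nv :: "'a graph \<Rightarrow> nat" where "nv G = card (verts G)"

definition induced :: "'a graph \<Rightarrow> 'a set \<Rightarrow> 'a graph" where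
  "induced G L = (L, {e \<in> edges G. e \<subseteq> L})"

definition graph_iso :: "'a graph \<Rightarrow> 'b graph \<Rightarrow> bool" where
  "graph_iso G F \<longleftrightarrow> (\<exists>f. bij_betw f (verts G) (verts F) \<and>
     (\<forall>x\<in>verts G. \<forall>y\<in>verts G. {x, y} \<in> edges G \<longleftrightarrow> {f x, f y} \<in> edges F))"

definition colour_class :: "'a graph \<Rightarrow> 'a set \<Rightarrow> ('a set \<Rightarrow> nat) \<Rightarrow> nat \<Rightarrow> 'a graph" where
  "colour_class G S c i = (verts G, {e \<in> edges (induced G S). c e = i})"

definition is_colouring :: "'a graph \<Rightarrow> 'a set \<Rightarrow> nat \<Rightarrow> ('a set \<Rightarrow> nat) \<Rightarrow> bool" where
  "is_colouring G S r c \<longleftrightarrow> (\<forall>e\<in>edges (induced G S). c e \<in> {1..r})"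

text \<open>Hypergraphs are identified with their edge sets.\<close>
type_synonym 'a hypergraph = "'a set set"

definition restrict_hg :: "'a hypergraph \<Rightarrow> 'a set \<Rightarrow> 'a hypergraph" where
  "restrict_hg \<G> W = {E \<in> \<G>. E \<subseteq> W}"

definition frakI :: "'b graph \<Rightarrow> 'a graph \<Rightarrow> 'a graph \<Rightarrow> 'a hypergraph" where
  "frakI F G' G = {L. L \<subseteq> verts G \<and> edges (induced G' L) = edges (induced G L)
                      \<and> graph_iso (induced G L) F}"

definition e_nu :: "'a hypergraph \<Rightarrow> ('a set \<Rightarrow> real) \<Rightarrow> real" where
  "e_nu \<G> \<nu> = (\<Sum>E\<in>\<G>. \<nu> E)"

definition d_nu :: "'a hypergraph \<Rightarrow> ('a set \<Rightarrow> real) \<Rightarrow> 'a set \<Rightarrow> real" where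
  "d_nu \<G> \<nu> L = (\<Sum>E\<in>{E \<in> \<G>. L \<subseteq> E}. \<nu> E)"

text \<open>Sum over L with |L| \<ge> 2 contained in the vertex set of the hypergraph; terms with L
  not contained in any edge vanish, so taking the union of the edges as vertex set is harmless.\<close>
definition Lambda_p :: "real \<Rightarrow> 'a hypergraph \<Rightarrow> ('a set \<Rightarrow> real) \<Rightarrow> real" where
  "Lambda_p p \<G> \<nu> = (\<Sum>L\<in>{L. L \<subseteq> \<Union>\<G> \<and> card L \<ge> 2}. (d_nu \<G> \<nu> L)^2 / p ^ card L)"

definition janson :: "real \<Rightarrow> real \<Rightarrow> 'a hypergraph \<Rightarrow> bool" where
  "janson p R \<G> \<longleftrightarrow> (R > 0 \<longrightarrow>
     (\<exists>\<nu>. (\<forall>E\<in>\<G>. \<nu> E \<ge> 0) \<and> Lambda_p p \<G> \<nu> < (e_nu \<G> \<nu>)^2 / R))"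

definition Cconst :: nat where "Cconst = 300"
definition delta :: "nat \<Rightarrow> real" where "delta r = 1 / real r ^ 50"
definition pconst :: "nat \<Rightarrow> nat \<Rightarrow> real" where
  "pconst k r = 1 / (2^25 * real k ^ 2 * real r ^ 4)"

definition classE :: "nat \<Rightarrow> nat \<Rightarrow> (nat \<Rightarrow> nat) \<Rightarrow> 'a graph \<Rightarrow> bool" where
  "classE k r s G \<longleftrightarrow>
    (let t = (\<Sum>i=1..r. s i); p = pconst k r in
     \<forall>t' < t. \<forall>F :: nat \<Rightarrow> nat graph.
       (\<forall>i\<in>{1..r}. wf_graph (F i) \<and> nv (F i) \<le> s i) \<and> (\<Sum>i=1..r. nv (F i)) = t' \<longrightarrow>
       (\<forall>W c. W \<subseteq> verts G \<and> real (card W) \<ge> (delta r / (8 * r)) ^ (t - t') * real (nv G)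
              \<and> is_colouring G W r c \<longrightarrow>
          (\<exists>i\<in>{1..r}. janson p (p * card W)
             (restrict_hg (frakI (F i) (colour_class G W c i) G) W))))"

definition SG :: "nat \<Rightarrow> nat \<Rightarrow> (nat \<Rightarrow> 'b graph) \<Rightarrow> 'a graph \<Rightarrow> ('a set \<times> ('a set \<Rightarrow> nat)) set" where
  "SG k r H G = {(S, c). S \<subseteq> verts G \<and> real (card S) \<ge> delta r powr (2/3) * real (nv G)
       \<and> is_colouring G S r c
       \<and> (\<forall>i\<in>{1..r}. \<not> janson (pconst k r) (2 powr (-9) / r * delta r * pconst k r * nv G)
                         (restrict_hg (frakI (H i) (colour_class G S c i) G) S))}"

definition classB' :: "nat \<Rightarrow> nat \<Rightarrow> (nat \<Rightarrow> 'b graph) \<Rightarrow> 'a graph \<Rightarrow> bool" where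
  "classB' k r H G \<longleftrightarrow> (\<exists>S c. S \<subseteq> verts G \<and> real (card S) \<ge> delta r powr (2/3) * real (nv G)
       \<and> is_colouring G S r c
       \<and> (\<forall>i\<in>{1..r}. \<not> janson (pconst k r) (2 powr (-9) / r * delta r * pconst k r * nv G)
                         (restrict_hg (frakI (H i) (colour_class G S c i) G) S)))"

end

theory Submission
  imports Defs
begin

lemma janson_mono_R:
  assumes "R \<le> R'" "janson p R' G" shows "janson p R G"
proof (cases "R > 0")
  case True
  then have "R' > 0" using assms by simp
  then obtain \<nu> where nu: "\<forall>E\<in>G. \<nu> E \<ge> 0" "Lambda_p p G \<nu> < (e_nu G \<nu>)^2 / R'"
    using assms unfolding janson_def by blast
  have "(e_nu G \<nu>)^2 / R' \<le> (e_nu G \<nu>)^2 / R"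
    using True assms(1) by (intro divide_left_mono) auto
  with nu show ?thesis unfolding janson_def by force
qed (simp add: janson_def)

lemma janson_mono_G:
  assumes fin: "finite W" and sub: "G \<subseteq> G'" and inW: "\<forall>E\<in>G'. E \<subseteq> W"
    and J: "janson p R G"
  shows "janson p R G'"
proof (cases "R > 0")
  case True
  then obtain \<nu> where nu: "\<forall>E\<in>G. \<nu> E \<ge> 0" "Lambda_p p G \<nu> < (e_nu G \<nu>)^2 / R"
    using J unfolding janson_def by blast
  define \<mu> where "\<mu> E = (if E \<in> G then \<nu> E else 0)" for E
  have finG': "finite G'" using fin inW by (meson Pow_iff finite_Pow_iff finite_subset subsetI)
  have finG: "finite G" using finG' sub finite_subset by blast
  have e: "e_nu G' \<mu> = e_nu G \<nu>"
    unfolding e_nu_def \<mu>_def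
    using sum.mono_neutral_cong_right[OF finG' sub, of "\<lambda>E. if E \<in> G then \<nu> E else 0" \<nu>] by auto
  have d: "d_nu G' \<mu> L = d_nu G \<nu> L" for L
  proof -
    have "d_nu G' \<mu> L = (\<Sum>E\<in>{E \<in> G'. L \<subseteq> E}. \<mu> E)" by (simp add: d_nu_def)
    also have "\<dots> = (\<Sum>E\<in>{E \<in> G. L \<subseteq> E}. \<nu> E)"
      unfolding \<mu>_def
      by (rule sum.mono_neutral_cong_right) (use finG' sub in auto)
    finally show ?thesis by (simp add: d_nu_def)
  qed
  have UW: "\<Union>G' \<subseteq> W" using inW by blast
  have finL: "finite {L. L \<subseteq> \<Union>G' \<and> 2 \<le> card L}"
    by (rule finite_subset[of _ "Pow W"]) (use UW fin in auto)
  have lam: "Lambda_p p G' \<mu> = Lambda_p p G \<nu>"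
    unfolding Lambda_p_def d
    apply (rule sum.mono_neutral_right[OF finL])
    using sub apply blast
  proof (intro ballI)
    fix L assume "L \<in> {L. L \<subseteq> \<Union>G' \<and> 2 \<le> card L} - {L. L \<subseteq> \<Union>G \<and> 2 \<le> card L}"
    then have "{E \<in> G. L \<subseteq> E} = {}" by blast
    then have "d_nu G \<nu> L = 0" unfolding d_nu_def by (metis sum.empty)
    then show "(d_nu G \<nu> L)\<^sup>2 / p ^ card L = 0" by simp
  qed
  have "\<forall>E\<in>G'. \<mu> E \<ge> 0" using nu by (simp add: \<mu>_def)
  with nu e lam show ?thesis unfolding janson_def by auto
qed (simp add: janson_def)

theorem lemma6p6:
  fixes k r N :: nat and s :: "nat \<Rightarrow> nat" and H :: "nat \<Rightarrow> 'b graph" and G :: "'a graph"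
    and S :: "'a set" and c :: "'a set \<Rightarrow> nat"
  assumes r2: "r \<ge> 2"
    and sk: "\<forall>i\<in>{1..r}. s i \<le> k"
    and H: "\<forall>i\<in>{1..r}. wf_graph (H i) \<and> nv (H i) \<le> s i"
    and N: "N \<ge> r ^ (Cconst * (k + (\<Sum>i=1..r. s i)))"
    and G: "wf_graph G" "nv G = N"
    and GB: "classB' k r H G" and GE: "classE k r s G"
    and Sc: "(S, c) \<in> SG k r H G"
  shows "\<exists>U (R :: nat \<Rightarrow> nat). U \<subseteq> S \<and>
     real (card U) = of_int \<lceil>delta r * N\<rceil> + real (\<Sum>i=1..r. R i) \<and>
     (\<forall>i\<in>{1..r}. R i \<le> pconst k r * card U / (2^9 * r)) \<and>
     (\<forall>i\<in>{1..r}. janson (pconst k r) (R i) (restrict_hg (frakI (H i) (colour_class G S c i) G) U)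
        \<and> (\<forall>v\<in>S - U. \<not> janson (pconst k r) (R i + 1)
               (restrict_hg (frakI (H i) (colour_class G S c i) G) (U \<union> {v}))))"
proof -
  define p where "p = pconst k r"
  define I where "I i U = restrict_hg (frakI (H i) (colour_class G S c i) G) U" for i U
  define d0 where "d0 = \<lceil>delta r * N\<rceil>"
  define thr where "thr = 2 powr (-9) / r * delta r * pconst k r * nv G"
  have S: "S \<subseteq> verts G" "real (card S) \<ge> delta r powr (2/3) * real (nv G)"
    and notJ: "\<forall>i\<in>{1..r}. \<not> janson p thr (I i S)"
    using Sc unfolding SG_def I_def p_def thr_def by auto
  have finV: "finite (verts G)" using G(1) by (simp add: wf_graph_def)
  have finS: "finite S" using S(1) finV finite_subset by blast
  have rpos: "real r > 0" using r2 by simp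
  have dpos: "delta r > 0" and dle1: "delta r \<le> 1"
    using r2 by (auto simp: delta_def)
  have ppos: "p \<ge> 0" by (simp add: p_def pconst_def)
  have "delta r powr 1 \<le> delta r powr (2/3)"
    by (rule powr_mono') (use dpos dle1 in auto)
  then have "delta r * N \<le> card S" using S(2) G(2) dpos
    by (smt (verit) mult_right_mono of_nat_0_le_iff powr_one_gt_zero_iff)
  then have d0S: "d0 \<le> int (card S)" unfolding d0_def by (simp add: ceiling_le)
  have d0nn: "d0 \<ge> 0" unfolding d0_def using dpos by (simp add: order.strict_trans2[of "-1" 0])
  have inI: "\<forall>E\<in>I i W. E \<subseteq> W" for i W by (simp add: I_def restrict_hg_def)
  have Imono: "I i U \<subseteq> I i W" if "U \<subseteq> W" for i U W
    using that by (auto simp: I_def restrict_hg_def)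
  define P where "P = (\<lambda>(U, R). U \<subseteq> S \<and> int (card U) = d0 + int (\<Sum>i=1..r. R i)
      \<and> (\<forall>i\<in>{1..r}. janson p (real (R i)) (I i U)))"
  obtain U0 where U0: "U0 \<subseteq> S" "card U0 = nat d0"
    using obtain_subset_with_card_n[of "nat d0" S] d0S by force
  have P0: "P (U0, \<lambda>_. 0)" unfolding P_def using U0 d0nn by (simp add: janson_def)
  have bnd: "\<forall>y. P y \<longrightarrow> card (fst y) < card S + 1"
  proof (intro allI impI)
    fix y assume Py: "P y"
    obtain a b where y: "y = (a, b)" by (cases y)
    have "a \<subseteq> S" using Py unfolding P_def y by simp
    then have "card a \<le> card S" by (rule card_mono[OF finS])
    then show "card (fst y) < card S + 1" using y by simp
  qed
  obtain y where Py: "P y" and maxy: "\<forall>z. P z \<longrightarrow> card (fst z) \<le> card (fst y)"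
    using ex_has_greatest_nat[OF P0 bnd] by blast
  obtain U R where yUR: "y = (U, R)" by (cases y)
  have PUR: "P (U, R)" using Py yUR by simp
  have max: "\<forall>z. P z \<longrightarrow> card (fst z) \<le> card U" using maxy yUR by simp
  have US: "U \<subseteq> S" and cardU: "int (card U) = d0 + int (\<Sum>i=1..r. R i)"
    and JU: "\<forall>i\<in>{1..r}. janson p (real (R i)) (I i U)"
    using PUR unfolding P_def by auto
  have finU: "finite U" using US finS finite_subset by blast
  have Rlt: "real (R i) < thr" if i: "i \<in> {1..r}" for i
  proof (rule ccontr)
    assume "\<not> real (R i) < thr"
    then have "thr \<le> real (R i)" by simp
    moreover have "janson p (real (R i)) (I i U)" using JU i by blast
    ultimately have "janson p thr (I i U)" by (rule janson_mono_R)
    then have "janson p thr (I i S)"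
      by (rule janson_mono_G[OF finS Imono[OF US] inI])
    then show False using notJ i by blast
  qed
  have cardU_ge: "delta r * N \<le> real (card U)"
  proof -
    have "real_of_int d0 \<le> real (card U)" using cardU by linarith
    moreover have "delta r * N \<le> real_of_int d0" unfolding d0_def by simp
    ultimately show ?thesis by linarith
  qed
  have thr_le: "thr \<le> pconst k r * card U / (2^9 * r)"
  proof -
    have "thr = p * (delta r * N) / (2^9 * r)"
      unfolding thr_def p_def using G(2) by (simp add: powr_minus_divide powr_realpow field_simps)
    also have "\<dots> \<le> p * card U / (2^9 * r)"
      using cardU_ge ppos rpos by (intro divide_right_mono mult_left_mono) auto
    finally show ?thesis by (simp add: p_def)
  qed
  have maxb: "\<not> janson p (real (R i + 1)) (I i (U \<union> {v}))"
    if i: "i \<in> {1..r}" and v: "v \<in> S - U" for i v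
  proof
    assume J: "janson p (real (R i + 1)) (I i (U \<union> {v}))"
    define R' where "R' = R(i := R i + 1)"
    have sumR': "(\<Sum>j=1..r. R' j) = (\<Sum>j=1..r. R j) + 1"
    proof -
      have "(\<Sum>j=1..r. R' j) = R' i + (\<Sum>j\<in>{1..r}-{i}. R' j)"
        using i by (simp add: sum.remove)
      also have "(\<Sum>j\<in>{1..r}-{i}. R' j) = (\<Sum>j\<in>{1..r}-{i}. R j)"
        by (rule sum.cong) (auto simp: R'_def)
      also have "(\<Sum>j=1..r. R j) = R i + (\<Sum>j\<in>{1..r}-{i}. R j)"
        using i by (simp add: sum.remove)
      ultimately show ?thesis by (simp add: R'_def)
    qed
    have finUv: "finite (U \<union> {v})" using finU by simp
    have "P (U \<union> {v}, R')"
      unfolding P_def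
    proof (simp only: case_prod_conv, intro conjI ballI)
      show "U \<union> {v} \<subseteq> S" using US v by auto
      show "int (card (U \<union> {v})) = d0 + int (\<Sum>j=1..r. R' j)"
        using cardU sumR' v finU by simp
      fix j assume j: "j \<in> {1..r}"
      show "janson p (real (R' j)) (I j (U \<union> {v}))"
      proof (cases "j = i")
        case True then show ?thesis using J by (simp add: R'_def)
      next
        case False
        have "janson p (real (R j)) (I j U)" using JU j by blast
        then have "janson p (real (R j)) (I j (U \<union> {v}))"
          by (rule janson_mono_G[OF finUv Imono[OF Un_upper1] inI])
        then show ?thesis using False by (simp add: R'_def)
      qed
    qed
    then have "card (fst (U \<union> {v}, R')) \<le> card U" using max by blast
    then have "card (U \<union> {v}) \<le> card U" by simp
    then show False using v finU by simp
  qed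
  show ?thesis
  proof (intro exI conjI)
    show "U \<subseteq> S" by (rule US)
    show "real (card U) = of_int \<lceil>delta r * N\<rceil> + real (\<Sum>i=1..r. R i)"
      using cardU unfolding d0_def by linarith
    show "\<forall>i\<in>{1..r}. real (R i) \<le> pconst k r * card U / (2^9 * r)"
      using Rlt thr_le by (meson less_eq_real_def order_trans)
    show "\<forall>i\<in>{1..r}. janson (pconst k r) (R i) (restrict_hg (frakI (H i) (colour_class G S c i) G) U)
        \<and> (\<forall>v\<in>S - U. \<not> janson (pconst k r) (R i + 1)
               (restrict_hg (frakI (H i) (colour_class G S c i) G) (U \<union> {v})))"
      using JU maxb unfolding I_def p_def by auto
  qed
qed

end
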